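(* Let $K$ be a finite simplicial complex equipped with two assignments of edge lengths, giving discrete geodesic distance functions $f^1_p,f^2_p$ for each vertex $p$, and let $\epsilon=\max_{p\in\mathrm{Vert}(K)}\max_{q\in\mathrm{Vert}(K)}|f^1_p(q)-f^2_p(q)|$. Fix $d$ and let $\mathcal{X}^1$ and $\mathcal{X}^2$ be subgroup filtrations of $H_d(K;\mathbb{Z}_2)$ obtained from optimal homology bases with respect to the sizes $S^1$ and $S^2$ respectively. Then $\mathrm{dist}(\mathcal{X}^1,\mathcal{X}^2)\le\epsilon$.
   Context: For a given edge-length assignment, $f_p(q)$ is the shortest-path length from vertex $p$ to vertex $q$ in the 1-skeleton of $K$, and $f_p(\sigma)=\max_{q\in\mathrm{Vert}(\sigma)}f_p(q)$ for a simplex $\sigma$. The geodesic ball $B_p^t=\{\sigma\in K:f_p(\sigma)\le t\}$ carries a class $h$ if it contains a cycle representing $h$; $r_{f_p}(h)$ is the least $t$ for which $B_p^t$ carries $h$, and the size of $h$ is $S(h)=\min_{p}r_{f_p}(h)$ ($S^1,S^2$ denote sizes computed from $f^1,f^2$). Let $\beta=\dim H_d(K;\mathbb{Z}_2)$. An optimal homology basis is a set of $\beta$ linearly independent (nonzero) classes whose sizes have minimal sum; such a basis is obtained greedily by scanning nontrivial classes in increasing order of size and keeping each one linearly independent of those already kept. Given an optimal basis $h_1,\dots,h_\beta$ sorted so that $S(h_i)\le S(h_{i+1})$, its subgroup filtration is $\mathcal{X}=\{\psi_0,\psi_1,\dots,\psi_\beta\}$ with $\psi_i=\mathrm{span}(h_1,\dots,h_i)$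 ($\psi_0$ trivial), and $S(\psi_i):=S(h_i)$ for $i\ge1$. For filtrations $\mathcal{X}^1,\mathcal{X}^2$, the projection $\mathrm{proj}(\psi^1_i,\mathcal{X}^2)$ is $\psi^2_j$ with $j$ the least index such that $\psi^1_i\subseteq\psi^2_j$ (and symmetrically). The distance is $\mathrm{dist}(\mathcal{X}^1,\mathcal{X}^2)=\max\{\max_i|S^1(\psi^1_i)-S^2(\mathrm{proj}(\psi^1_i,\mathcal{X}^2))|,\ \max_i|S^2(\psi^2_i)-S^1(\mathrm{proj}(\psi^2_i,\mathcal{X}^1))|\}$, the maxima taken over $i=1,\dots,\beta$. *)

theory Defs
  imports Complex_Main
begin

definition simplicial_complex :: "'v set set \<Rightarrow> bool" where
  "simplicial_complex K \<longleftrightarrow> finite K \<and> (\<forall>\<sigma>\<in>K. finite \<sigma> \<and> \<sigma> \<noteq> {}) \<and>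
     (\<forall>\<sigma>\<in>K. \<forall>\<tau>. \<tau> \<subseteq> \<sigma> \<and> \<tau> \<noteq> {} \<longrightarrow> \<tau> \<in> K)"

definition vertices :: "'v set set \<Rightarrow> 'v set" where
  "vertices K = \<Union>K"

definition simplices :: "'v set set \<Rightarrow> nat \<Rightarrow> 'v set set" where
  "simplices K k = {\<sigma>\<in>K. card \<sigma> = Suc k}"

text \<open>A k-chain with Z_2 coefficients is a set of k-simplices; addition is symmetric difference.\<close>
definition symdiff :: "'a set \<Rightarrow> 'a set \<Rightarrow> 'a set" where
  "symdiff A B = (A - B) \<union> (B - A)"

definition bd :: "'v set set \<Rightarrow> nat \<Rightarrow> 'v set set \<Rightarrow> 'v set set" where
  "bd K k c = (if k = 0 then {} else
      {\<tau>\<in>simplices K (k - 1). odd (card {\<sigma>\<in>c. \<tau> \<subseteq> \<sigma>})})"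

definition cycles :: "'v set set \<Rightarrow> nat \<Rightarrow> 'v set set set" where
  "cycles K d = {c. c \<subseteq> simplices K d \<and> bd K d c = {}}"

definition boundaries :: "'v set set \<Rightarrow> nat \<Rightarrow> 'v set set set" where
  "boundaries K d = {bd K (Suc d) c | c. c \<subseteq> simplices K (Suc d)}"

definition hclass :: "'v set set \<Rightarrow> nat \<Rightarrow> 'v set set \<Rightarrow> 'v set set set" where
  "hclass K d z = {z'\<in>cycles K d. symdiff z' z \<in> boundaries K d}"

definition homology :: "'v set set \<Rightarrow> nat \<Rightarrow> 'v set set set set" where
  "homology K d = hclass K d ` cycles K d"

definition hzero :: "'v set set \<Rightarrow> nat \<Rightarrow> 'v set set set" where
  "hzero K d = hclass K d {}"

definition hadd :: "'v set set set \<Rightarrow> 'v set set set \<Rightarrow> 'v set set set" where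
  "hadd h1 h2 = {z. \<exists>a\<in>h1. \<exists>b\<in>h2. z = symdiff a b}"

inductive_set hspan :: "'v set set \<Rightarrow> nat \<Rightarrow> 'v set set set set \<Rightarrow> 'v set set set set"
  for K d H where
  zero: "hzero K d \<in> hspan K d H"
| add: "h \<in> H \<Longrightarrow> x \<in> hspan K d H \<Longrightarrow> hadd h x \<in> hspan K d H"

definition hindep :: "'v set set \<Rightarrow> nat \<Rightarrow> 'v set set set list \<Rightarrow> bool" where
  "hindep K d hs \<longleftrightarrow> distinct hs \<and> set hs \<subseteq> homology K d \<and>
     (\<forall>h\<in>set hs. h \<notin> hspan K d (set hs - {h}))"

definition hdim :: "'v set set \<Rightarrow> nat \<Rightarrow> nat" where
  "hdim K d = Max {length hs | hs. hindep K d hs}"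

definition edges :: "'v set set \<Rightarrow> 'v set set" where
  "edges K = {e\<in>K. card e = 2}"

definition edge_lengths :: "'v set set \<Rightarrow> ('v set \<Rightarrow> real) \<Rightarrow> bool" where
  "edge_lengths K l \<longleftrightarrow> (\<forall>e\<in>edges K. l e > 0)"

definition walk :: "'v set set \<Rightarrow> 'v list \<Rightarrow> bool" where
  "walk K xs \<longleftrightarrow> xs \<noteq> [] \<and> set xs \<subseteq> vertices K \<and>
     (\<forall>i < length xs - 1. {xs ! i, xs ! Suc i} \<in> edges K)"

definition walk_len :: "('v set \<Rightarrow> real) \<Rightarrow> 'v list \<Rightarrow> real" where
  "walk_len l xs = (\<Sum>i < length xs - 1. l {xs ! i, xs ! Suc i})"

definition skel_connected :: "'v set set \<Rightarrow> bool" where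
  "skel_connected K \<longleftrightarrow> K \<noteq> {} \<and>
     (\<forall>p\<in>vertices K. \<forall>q\<in>vertices K. \<exists>xs. walk K xs \<and> hd xs = p \<and> last xs = q)"

definition geod :: "('v set \<Rightarrow> real) \<Rightarrow> 'v set set \<Rightarrow> 'v \<Rightarrow> 'v \<Rightarrow> real" where
  "geod l K p q = Inf {walk_len l xs | xs. walk K xs \<and> hd xs = p \<and> last xs = q}"

definition geod_simplex :: "('v set \<Rightarrow> real) \<Rightarrow> 'v set set \<Rightarrow> 'v \<Rightarrow> 'v set \<Rightarrow> real" where
  "geod_simplex l K p \<sigma> = Max (geod l K p ` \<sigma>)"

definition ball :: "('v set \<Rightarrow> real) \<Rightarrow> 'v set set \<Rightarrow> 'v \<Rightarrow> real \<Rightarrow> 'v set set" where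
  "ball l K p t = {\<sigma>\<in>K. geod_simplex l K p \<sigma> \<le> t}"

definition carries :: "'v set set \<Rightarrow> 'v set set set \<Rightarrow> bool" where
  "carries B h \<longleftrightarrow> (\<exists>z\<in>h. z \<subseteq> B)"

definition radius :: "('v set \<Rightarrow> real) \<Rightarrow> 'v set set \<Rightarrow> 'v \<Rightarrow> 'v set set set \<Rightarrow> real" where
  "radius l K p h = (LEAST t. carries (ball l K p t) h)"

definition hsize :: "('v set \<Rightarrow> real) \<Rightarrow> 'v set set \<Rightarrow> 'v set set set \<Rightarrow> real" where
  "hsize l K h = Min ((\<lambda>p. radius l K p h) ` vertices K)"

definition optimal_basis ::
  "('v set \<Rightarrow> real) \<Rightarrow> 'v set set \<Rightarrow> nat \<Rightarrow> 'v set set set list \<Rightarrow> bool" where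
  "optimal_basis l K d hs \<longleftrightarrow> hindep K d hs \<and> length hs = hdim K d \<and>
     (\<forall>hs'. hindep K d hs' \<and> length hs' = hdim K d \<longrightarrow>
        sum_list (map (hsize l K) hs) \<le> sum_list (map (hsize l K) hs'))"

text \<open>psi_i = span(h_1,...,h_i), with h_i = hs ! (i-1); psi_0 trivial.\<close>
definition filt :: "'v set set \<Rightarrow> nat \<Rightarrow> 'v set set set list \<Rightarrow> nat \<Rightarrow> 'v set set set set" where
  "filt K d hs i = hspan K d (set (take i hs))"

definition proj_idx ::
  "'v set set \<Rightarrow> nat \<Rightarrow> 'v set set set list \<Rightarrow> 'v set set set list \<Rightarrow> nat \<Rightarrow> nat" where
  "proj_idx K d hs1 hs2 i = (LEAST j. filt K d hs1 i \<subseteq> filt K d hs2 j)"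

definition filt_size :: "('v set \<Rightarrow> real) \<Rightarrow> 'v set set \<Rightarrow> 'v set set set list \<Rightarrow> nat \<Rightarrow> real" where
  "filt_size l K hs i = hsize l K (hs ! (i - 1))"

text \<open>Distance between the filtrations (taken to be 0 when beta = 0, i.e. empty maxima).\<close>
definition filt_dist ::
  "('v set \<Rightarrow> real) \<Rightarrow> ('v set \<Rightarrow> real) \<Rightarrow> 'v set set \<Rightarrow> nat \<Rightarrow>
   'v set set set list \<Rightarrow> 'v set set set list \<Rightarrow> real" where
  "filt_dist l1 l2 K d hs1 hs2 = Max ({0} \<union>
     {\<bar>filt_size l1 K hs1 i - filt_size l2 K hs2 (proj_idx K d hs1 hs2 i)\<bar> | i. i \<in> {1..length hs1}} \<union>
     {\<bar>filt_size l2 K hs2 i - filt_size l1 K hs1 (proj_idx K d hs2 hs1 i)\<bar> | i. i \<in> {1..length hs2}})"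

definition geod_eps :: "('v set \<Rightarrow> real) \<Rightarrow> ('v set \<Rightarrow> real) \<Rightarrow> 'v set set \<Rightarrow> real" where
  "geod_eps l1 l2 K = Max {\<bar>geod l1 K p q - geod l2 K p q\<bar> | p q. p \<in> vertices K \<and> q \<in> vertices K}"

end

theory Submission
  imports Defs
begin

lemma symdiff_assoc: "symdiff (symdiff a b) c = symdiff a (symdiff b c)"
  by (auto simp: symdiff_def)
lemma symdiff_comm: "symdiff a b = symdiff b a"
  by (auto simp: symdiff_def)
lemma symdiff_empty[simp]: "symdiff a {} = a" "symdiff {} a = a" "symdiff a a = {}"
  by (auto simp: symdiff_def)

lemma hadd_assoc: "hadd (hadd A B) C = hadd A (hadd B C)"
  unfolding hadd_def by (auto, metis symdiff_assoc, metis symdiff_assoc)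

lemma hadd_comm: "hadd A B = hadd B A"
  unfolding hadd_def by (auto, metis symdiff_comm, metis symdiff_comm)

lemma card_symdiff_parity:
  assumes "finite A" "finite B"
  shows "odd (card (symdiff A B)) \<longleftrightarrow> (odd (card A) \<noteq> odd (card B))"
proof -
  have 1: "card A = card (A - B) + card (A \<inter> B)"
    using assms by (metis card_Diff_subset_Int card_mono Int_lower1 le_add_diff_inverse2 finite_Int card_Diff_subset inf_le1 Diff_Diff_Int)
  have 2: "card B = card (B - A) + card (A \<inter> B)"
    using assms by (metis card_Diff_subset_Int card_mono Int_lower2 le_add_diff_inverse2 finite_Int card_Diff_subset inf_le2 Diff_Diff_Int inf_commute)
  have 3: "card (symdiff A B) = card (A - B) + card (B - A)"
    unfolding symdiff_def using assms by (intro card_Un_disjoint) auto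
  show ?thesis using 1 2 3 by presburger
qed

lemma bd_symdiff:
  assumes "finite a" "finite b"
  shows "bd K k (symdiff a b) = symdiff (bd K k a) (bd K k b)"
proof (cases "k = 0")
  case True then show ?thesis by (simp add: bd_def)
next
  case False
  have eq: "{\<sigma>\<in>symdiff a b. P \<sigma>} = symdiff {\<sigma>\<in>a. P \<sigma>} {\<sigma>\<in>b. P \<sigma>}" for P
    by (auto simp: symdiff_def)
  have par: "odd (card {\<sigma>\<in>symdiff a b. \<tau> \<subseteq> \<sigma>}) \<longleftrightarrow>
     (odd (card {\<sigma>\<in>a. \<tau> \<subseteq> \<sigma>}) \<noteq> odd (card {\<sigma>\<in>b. \<tau> \<subseteq> \<sigma>}))" for \<tau>
    unfolding eq using assms by (intro card_symdiff_parity) auto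
  show ?thesis
  proof (rule set_eqI)
    fix \<tau>
    show "\<tau> \<in> bd K k (symdiff a b) \<longleftrightarrow> \<tau> \<in> symdiff (bd K k a) (bd K k b)"
      using False par[of \<tau>] unfolding bd_def by (simp add: symdiff_def) blast
  qed
qed

lemma simplices_sub: "simplices K k \<subseteq> K"
  by (auto simp: simplices_def)

context
  fixes K :: "'v set set" and d :: nat
  assumes finK: "finite K"
begin

lemma chain_finite: "c \<subseteq> simplices K k \<Longrightarrow> finite c"
  using finK simplices_sub by (metis finite_subset)

lemma symdiff_sub: "a \<subseteq> S \<Longrightarrow> b \<subseteq> S \<Longrightarrow> symdiff a b \<subseteq> S"
  by (auto simp: symdiff_def)

lemma cycles_symdiff: "a \<in> cycles K d \<Longrightarrow> b \<in> cycles K d \<Longrightarrow> symdiff a b \<in> cycles K d"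
proof -
  assume a: "a \<in> cycles K d" and b: "b \<in> cycles K d"
  then have fa: "finite a" "finite b" using chain_finite by (auto simp: cycles_def)
  have "bd K d (symdiff a b) = symdiff (bd K d a) (bd K d b)" using bd_symdiff[OF fa] .
  then show ?thesis using a b symdiff_sub[of a "simplices K d" b] by (simp add: cycles_def)
qed

lemma bd_empty[simp]: "bd K k {} = {}"
  by (auto simp: bd_def)

lemma empty_cycle: "{} \<in> cycles K d"
  by (auto simp: cycles_def)

lemma boundaries_symdiff: "a \<in> boundaries K d \<Longrightarrow> b \<in> boundaries K d \<Longrightarrow> symdiff a b \<in> boundaries K d"
proof -
  assume "a \<in> boundaries K d" "b \<in> boundaries K d"
  then obtain c1 c2 where c: "a = bd K (Suc d) c1" "c1 \<subseteq> simplices K (Suc d)"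
     "b = bd K (Suc d) c2" "c2 \<subseteq> simplices K (Suc d)" by (auto simp: boundaries_def)
  then have "symdiff a b = bd K (Suc d) (symdiff c1 c2)"
    using bd_symdiff chain_finite by metis
  moreover have "symdiff c1 c2 \<subseteq> simplices K (Suc d)" using c symdiff_sub by metis
  ultimately show ?thesis by (auto simp: boundaries_def)
qed

lemma empty_boundary: "{} \<in> boundaries K d"
  unfolding boundaries_def by (rule CollectI, rule exI[of _ "{}"]) simp

lemma hclass_self: "a \<in> cycles K d \<Longrightarrow> a \<in> hclass K d a"
  by (auto simp: hclass_def empty_boundary)

lemma hadd_hclass:
  assumes a: "a \<in> cycles K d" and b: "b \<in> cycles K d"
  shows "hadd (hclass K d a) (hclass K d b) = hclass K d (symdiff a b)"
proof (rule set_eqI, rule iffI)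
  fix z assume "z \<in> hadd (hclass K d a) (hclass K d b)"
  then obtain x y where xy: "x \<in> hclass K d a" "y \<in> hclass K d b" "z = symdiff x y"
    by (auto simp: hadd_def)
  have "symdiff z (symdiff a b) = symdiff (symdiff x a) (symdiff y b)"
    using xy(3) by (auto simp: symdiff_def)
  then show "z \<in> hclass K d (symdiff a b)" using xy
    by (auto simp: hclass_def cycles_symdiff boundaries_symdiff)
next
  fix z assume z: "z \<in> hclass K d (symdiff a b)"
  have "symdiff z b \<in> hclass K d a"
  proof -
    have "symdiff (symdiff z b) a = symdiff z (symdiff a b)" by (auto simp: symdiff_def)
    then show ?thesis using z b by (auto simp: hclass_def cycles_symdiff)
  qed
  moreover have "z = symdiff (symdiff z b) b" by (auto simp: symdiff_def)
  ultimately show "z \<in> hadd (hclass K d a) (hclass K d b)"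
    using hclass_self[OF b] unfolding hadd_def by blast
qed

lemma hzero_in: "hzero K d \<in> homology K d"
  by (auto simp: hzero_def homology_def empty_cycle)

lemma hadd_closed: "x \<in> homology K d \<Longrightarrow> y \<in> homology K d \<Longrightarrow> hadd x y \<in> homology K d"
  by (auto simp: homology_def hadd_hclass cycles_symdiff)

lemma hadd_zero: "x \<in> homology K d \<Longrightarrow> hadd (hzero K d) x = x"
  by (auto simp: homology_def hzero_def hadd_hclass empty_cycle)

lemma hadd_zero2: "x \<in> homology K d \<Longrightarrow> hadd x (hzero K d) = x"
  using hadd_zero hadd_comm by metis

lemma hadd_self: "x \<in> homology K d \<Longrightarrow> hadd x x = hzero K d"
  by (auto simp: homology_def hzero_def hadd_hclass)

lemma homology_finite: "finite (homology K d)"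
proof -
  have "hclass K d a \<in> Pow (Pow K)" for a
    using simplices_sub unfolding hclass_def cycles_def by blast
  then have "homology K d \<subseteq> Pow (Pow K)"
    unfolding homology_def by blast
  then show ?thesis using finK by (meson finite_Pow_iff finite_subset)
qed

lemma class_finite: "h \<in> homology K d \<Longrightarrow> finite h"
proof -
  assume "h \<in> homology K d"
  then obtain a where "h = hclass K d a" by (auto simp: homology_def)
  then have "h \<subseteq> Pow K" using simplices_sub unfolding hclass_def cycles_def by blast
  then show ?thesis using finK by (meson finite_Pow_iff finite_subset)
qed

lemma class_nonzero_noempty:
  assumes "h \<in> homology K d" "h \<noteq> hzero K d"
  shows "{} \<notin> h"
proof
  assume e: "{} \<in> h"
  obtain a where a: "a \<in> cycles K d" "h = hclass K d a" using assms by (auto simp: homology_def)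
  then have ab: "a \<in> boundaries K d" using e by (auto simp: hclass_def)
  have "hclass K d a = hclass K d {}"
  proof (rule set_eqI)
    fix z
    have 1: "z = symdiff (symdiff z a) a" by (auto simp: symdiff_def)
    have "symdiff z a \<in> boundaries K d \<longleftrightarrow> z \<in> boundaries K d"
      using boundaries_symdiff[OF _ ab] 1 by metis
    then show "z \<in> hclass K d a \<longleftrightarrow> z \<in> hclass K d {}"
      unfolding hclass_def by simp
  qed
  then show False using a assms(2) by (simp add: hzero_def)
qed

lemma span_sub: "H \<subseteq> homology K d \<Longrightarrow> hspan K d H \<subseteq> homology K d"
proof
  fix x assume H: "H \<subseteq> homology K d" and xs: "x \<in> hspan K d H"
  from xs show "x \<in> homology K d"
    by (induction rule: hspan.induct) (use H in \<open>auto intro: hzero_in hadd_closed\<close>)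
qed

lemma span_add: assumes H: "H \<subseteq> homology K d" and xs: "x \<in> hspan K d H" and ys: "y \<in> hspan K d H"
  shows "hadd x y \<in> hspan K d H"
  using xs
proof (induction x rule: hspan.induct)
  case zero
  then show ?case using hadd_zero span_sub H ys by (metis subsetD)
next
  case (add h x)
  then show ?case by (simp add: hadd_assoc hspan.add)
qed

lemma span_mono: "H \<subseteq> G \<Longrightarrow> hspan K d H \<subseteq> hspan K d G"
proof
  fix x assume HG: "H \<subseteq> G" and xs: "x \<in> hspan K d H"
  from xs show "x \<in> hspan K d G"
    by (induction rule: hspan.induct) (use HG in \<open>auto intro: hspan.intros\<close>)
qed

lemma span_base: "H \<subseteq> homology K d \<Longrightarrow> h \<in> H \<Longrightarrow> h \<in> hspan K d H"
  using hspan.add[OF _ hspan.zero, of h H K d] hadd_zero2 by auto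

lemma span_subset_span: "H \<subseteq> hspan K d G \<Longrightarrow> G \<subseteq> homology K d \<Longrightarrow> hspan K d H \<subseteq> hspan K d G"
proof
  fix x assume HG: "H \<subseteq> hspan K d G" and G: "G \<subseteq> homology K d" and xs: "x \<in> hspan K d H"
  from xs show "x \<in> hspan K d G"
    by (induction rule: hspan.induct) (use HG G in \<open>auto intro: hspan.zero span_add\<close>)
qed

lemma span_empty: "x \<in> hspan K d {} \<Longrightarrow> x = hzero K d"
  by (induction rule: hspan.induct) auto

lemma span_insert:
  assumes y: "y \<in> homology K d" and H: "H \<subseteq> homology K d"
  shows "x \<in> hspan K d (insert y H) \<Longrightarrow> x \<in> hspan K d H \<or> (\<exists>s\<in>hspan K d H. x = hadd y s)"
proof (induction rule: hspan.induct)
  case zero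
  then show ?case by (simp add: hspan.zero)
next
  case (add h x)
  show ?case
  proof (cases "h = y")
    case True
    show ?thesis
    proof (cases "x \<in> hspan K d H")
      case True then show ?thesis using \<open>h = y\<close> by blast
    next
      case False
      then obtain s where s: "s \<in> hspan K d H" "x = hadd y s" using add.IH by blast
      have sV: "s \<in> homology K d" using s span_sub[OF H] by blast
      have "hadd h x = s" using True s sV y
        by (metis hadd_assoc hadd_self hadd_zero)
      then show ?thesis using s by simp
    qed
  next
    case False
    then have hH: "h \<in> H" using add.hyps by simp
    show ?thesis
    proof (cases "x \<in> hspan K d H")
      case True then show ?thesis using hH by (simp add: hspan.add)
    next
      case False
      then obtain s where s: "s \<in> hspan K d H" "x = hadd y s" using add.IH by blast
      have "hadd h x = hadd y (hadd h s)" using s by (metis hadd_assoc hadd_comm)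
      moreover have "hadd h s \<in> hspan K d H" using hH s by (simp add: hspan.add)
      ultimately show ?thesis by blast
    qed
  qed
qed

lemma exchange:
  assumes y: "y \<in> homology K d" and H: "H \<subseteq> homology K d"
    and x: "x \<in> hspan K d (insert y H)" and nx: "x \<notin> hspan K d H"
  shows "y \<in> hspan K d (insert x H)"
proof -
  obtain s where s: "s \<in> hspan K d H" "x = hadd y s" using span_insert[OF y H x] nx by blast
  have xV: "x \<in> homology K d" using x span_sub[of "insert y H"] y H by blast
  have sV: "s \<in> homology K d" using s span_sub[OF H] by blast
  have H2: "insert x H \<subseteq> homology K d" using xV H by simp
  have "hadd x s = y" using s sV y by (metis hadd_assoc hadd_self hadd_zero2)
  moreover have "hadd x s \<in> hspan K d (insert x H)"
    using span_add[OF H2] span_base[OF H2] span_mono[of H "insert x H"] s by blast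
  ultimately show ?thesis by simp
qed

definition isindep where
  "isindep H \<longleftrightarrow> H \<subseteq> homology K d \<and> (\<forall>h\<in>H. h \<notin> hspan K d (H - {h}))"

lemma hindep_iff: "hindep K d hs \<longleftrightarrow> distinct hs \<and> isindep (set hs)"
  by (auto simp: hindep_def isindep_def)

lemma indep_nonzero: "isindep H \<Longrightarrow> h \<in> H \<Longrightarrow> h \<noteq> hzero K d"
  unfolding isindep_def using hspan.zero by blast

lemma indep_subset: "isindep A \<Longrightarrow> B \<subseteq> A \<Longrightarrow> isindep B"
proof -
  assume a: "isindep A" "B \<subseteq> A"
  have "hspan K d (B - {h}) \<subseteq> hspan K d (A - {h})" for h using a(2) by (intro span_mono) blast
  then show ?thesis using a unfolding isindep_def by blast
qed

lemma indep_insert: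
  assumes I: "isindep H" and g: "g \<in> homology K d" and ng: "g \<notin> hspan K d H"
  shows "isindep (insert g H)" "g \<notin> H"
proof -
  have HV: "H \<subseteq> homology K d" using I by (simp add: isindep_def)
  show gH: "g \<notin> H" using ng span_base[OF HV] by blast
  have "h \<notin> hspan K d (insert g H - {h})" if h: "h \<in> insert g H" for h
  proof (cases "h = g")
    case True
    then show ?thesis using gH ng by simp
  next
    case False
    then have hH: "h \<in> H" using h by simp
    have e: "insert g H - {h} = insert g (H - {h})" using False by blast
    have nh: "h \<notin> hspan K d (H - {h})" using I hH by (simp add: isindep_def)
    show ?thesis
    proof
      assume "h \<in> hspan K d (insert g H - {h})"
      then have hx: "h \<in> hspan K d (insert g (H - {h}))" by (simp only: e)
      have HV': "H - {h} \<subseteq> homology K d" using HV by blast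
      have "g \<in> hspan K d (insert h (H - {h}))"
        by (rule exchange[OF g HV' hx nh])
      moreover have "insert h (H - {h}) = H" using hH by blast
      ultimately show False using ng by simp
    qed
  qed
  then show "isindep (insert g H)" using HV g by (simp add: isindep_def)
qed

lemma hdim_ge: "hindep K d hs \<Longrightarrow> length hs \<le> hdim K d"
proof -
  assume a: "hindep K d hs"
  have "{length hs | hs. hindep K d hs} \<subseteq> {..card (homology K d)}"
  proof
    fix n assume "n \<in> {length hs | hs. hindep K d hs}"
    then obtain xs where "n = length xs" "hindep K d xs" by blast
    then show "n \<in> {..card (homology K d)}"
      using homology_finite by (auto simp: hindep_def distinct_card[symmetric] intro: card_mono)
  qed
  then have "finite {length hs | hs. hindep K d hs}" using finite_subset by blast
  then show ?thesis using a unfolding hdim_def by (intro Max_ge) auto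
qed

lemma basis_spans:
  assumes I: "hindep K d hs" and L: "length hs = hdim K d" and g: "g \<in> homology K d"
  shows "g \<in> hspan K d (set hs)"
proof (rule ccontr)
  assume ng: "g \<notin> hspan K d (set hs)"
  have I2: "isindep (set hs)" "distinct hs" using I by (auto simp: hindep_iff)
  have "hindep K d (hs @ [g])"
    using indep_insert[OF I2(1) g ng] I2(2) by (simp add: hindep_iff)
  then have "length (hs @ [g]) \<le> hdim K d" by (rule hdim_ge)
  then show False using L by simp
qed

lemma greedy:
  assumes ob: "optimal_basis l K d hs" and g: "g \<in> homology K d"
  shows "g \<in> hspan K d {h\<in>set hs. hsize l K h \<le> hsize l K g}"
proof (rule ccontr)
  define S where "S = hsize l K"
  define G where "G = {h\<in>set hs. S h \<le> S g}"
  assume "g \<notin> hspan K d {h\<in>set hs. hsize l K h \<le> hsize l K g}"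
  then have ng: "g \<notin> hspan K d G" by (simp add: G_def S_def)
  have I: "hindep K d hs" and L: "length hs = hdim K d" using ob by (auto simp: optimal_basis_def)
  have I2: "isindep (set hs)" "distinct hs" using I by (auto simp: hindep_iff)
  have HV: "set hs \<subseteq> homology K d" using I2 by (simp add: isindep_def)
  define F where "F = {T. G \<subseteq> T \<and> T \<subseteq> set hs \<and> g \<in> hspan K d T}"
  have "set hs \<in> F" using basis_spans[OF I L g] by (auto simp: F_def G_def)
  then obtain T where T: "T \<in> F" and Tmin: "\<And>T'. T' \<in> F \<Longrightarrow> card T \<le> card T'"
    using ex_has_least_nat[of "\<lambda>T. T \<in> F" "set hs" card] by blast
  have TV: "T \<subseteq> homology K d" "finite T" using T HV by (auto simp: F_def intro: finite_subset)
  have "T \<noteq> G" using T ng by (auto simp: F_def)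
  then obtain h where h: "h \<in> T" "h \<notin> G" using T by (auto simp: F_def)
  have hs: "h \<in> set hs" using h T by (auto simp: F_def)
  have Sgh: "S g < S h" using h hs by (auto simp: G_def)
  have ng2: "g \<notin> hspan K d (T - {h})"
  proof
    assume "g \<in> hspan K d (T - {h})"
    then have "T - {h} \<in> F" using T h by (auto simp: F_def)
    then have "card T \<le> card (T - {h})" by (rule Tmin)
    moreover have "card (T - {h}) < card T" using h TV by (meson card_Diff1_less)
    ultimately show False by simp
  qed
  have eT: "insert h (T - {h}) = T" using h by blast
  have hx: "h \<in> hspan K d (insert g (T - {h}))"
    using exchange[of h "T - {h}" g] h TV T ng2 eT by (auto simp: F_def)
  define H where "H = set hs - {h}"
  have HV2: "H \<subseteq> homology K d" using HV by (auto simp: H_def)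
  have na: "g \<notin> hspan K d H"
  proof
    assume gH: "g \<in> hspan K d H"
    have "T - {h} \<subseteq> H" using T by (auto simp: F_def H_def)
    then have "insert g (T - {h}) \<subseteq> hspan K d H" using gH span_base[OF HV2] by blast
    then have "h \<in> hspan K d H" using hx span_subset_span[OF _ HV2] by blast
    then show False using I2 hs by (auto simp: isindep_def H_def)
  qed
  have IH: "isindep H" using indep_subset[OF I2(1)] by (auto simp: H_def)
  have Ig: "isindep (insert g H)" "g \<notin> H" using indep_insert[OF IH g na] by auto
  define hs' where "hs' = map (\<lambda>x. if x = h then g else x) hs"
  have set': "set hs' = insert g H" using hs by (auto simp: hs'_def H_def)
  have "inj_on (\<lambda>x. if x = h then g else x) (set hs)"
    using Ig(2) by (auto simp: inj_on_def H_def)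
  then have dist': "distinct hs'" using I2(2) by (simp add: hs'_def distinct_map)
  have "hindep K d hs'" using dist' set' Ig(1) by (simp add: hindep_iff)
  moreover have "length hs' = hdim K d" using L by (simp add: hs'_def)
  ultimately have le: "sum_list (map S hs) \<le> sum_list (map S hs')"
    using ob by (auto simp: optimal_basis_def S_def)
  have finH: "finite H" by (simp add: H_def)
  have "sum_list (map S hs') = S g + sum S H"
    using dist' set' Ig(2) finH by (simp add: sum_list_distinct_conv_sum_set)
  moreover have "sum_list (map S hs) = S h + sum S H"
    using I2(2) hs by (simp add: sum_list_distinct_conv_sum_set H_def sum.remove)
  ultimately show False using le Sgh by simp
qed

lemma bound_one:
  assumes oa: "optimal_basis la K d a" and sa: "sorted (map (hsize la K) a)"
    and ob: "optimal_basis lb K d b" and sb: "sorted (map (hsize lb K) b)"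
    and stab: "\<And>h. h \<in> homology K d \<Longrightarrow> h \<noteq> hzero K d \<Longrightarrow>
        hsize lb K h \<le> hsize la K h + e \<and> hsize la K h \<le> hsize lb K h + e"
    and i: "i \<in> {1..length a}"
  shows "\<bar>filt_size la K a i - filt_size lb K b (proj_idx K d a b i)\<bar> \<le> e"
proof -
  define Sa where "Sa = hsize la K"
  define Sb where "Sb = hsize lb K"
  have Ia: "isindep (set a)" "distinct a" using oa by (auto simp: optimal_basis_def hindep_iff)
  have Ib: "isindep (set b)" "distinct b" using ob by (auto simp: optimal_basis_def hindep_iff)
  have aV: "set a \<subseteq> homology K d" using Ia by (simp add: isindep_def)
  have bV: "set b \<subseteq> homology K d" using Ib by (simp add: isindep_def)
  have sa': "sorted (map Sa a)" and sb': "sorted (map Sb b)" using sa sb by (simp_all add: Sa_def Sb_def)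
  have il: "i - 1 < length a" "1 \<le> i" using i by auto
  define ai where "ai = a ! (i - 1)"
  define s where "s = Sa ai"
  have takeV: "set (take j a) \<subseteq> homology K d" "set (take j b) \<subseteq> homology K d" for j
    using aV bV by (meson order_trans set_take_subset)+
  define P where "P = (\<lambda>j. hspan K d (set (take i a)) \<subseteq> hspan K d (set (take j b)))"
  define Gb where "Gb = {h\<in>set b. Sb h \<le> s + e}"
  have GbV: "Gb \<subseteq> homology K d" using bV by (auto simp: Gb_def)
  have step1: "x \<in> hspan K d Gb" if x: "x \<in> set (take i a)" for x
  proof -
    obtain k where k: "k < length (take i a)" "x = take i a ! k" using x by (metis in_set_conv_nth)
    then have k2: "k < i" "k < length a" "x = a ! k" by auto
    have "Sa x \<le> s" unfolding s_def ai_def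
      using sorted_nth_mono[OF sa', of k "i - 1"] k2 il by simp
    moreover have xV: "x \<in> homology K d" "x \<noteq> hzero K d"
      using k2 aV Ia(1) indep_nonzero by auto
    ultimately have "Sb x \<le> s + e" using stab[OF xV] by (simp add: Sa_def Sb_def)
    moreover have "x \<in> hspan K d {h\<in>set b. Sb h \<le> Sb x}" using greedy[OF ob xV(1)] by (simp add: Sb_def)
    ultimately have xin: "x \<in> hspan K d {h\<in>set b. Sb h \<le> Sb x}" and sub: "{h\<in>set b. Sb h \<le> Sb x} \<subseteq> Gb"
      by (auto simp: Gb_def)
    show ?thesis using span_mono[OF sub] xin by blast
  qed
  have spanA: "hspan K d (set (take i a)) \<subseteq> hspan K d Gb"
    using span_subset_span[OF _ GbV] step1 by blast
  have "Gb \<subseteq> set (take (length b) b)" by (auto simp: Gb_def)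
  then have "P (length b)" unfolding P_def using spanA span_mono by blast
  define j0 where "j0 = proj_idx K d a b i"
  have j0: "j0 = (LEAST j. P j)" by (simp add: j0_def proj_idx_def filt_def P_def)
  have Pj0: "P j0" using \<open>P (length b)\<close> j0 by (metis LeastI)
  have j0le: "j0 \<le> length b" using \<open>P (length b)\<close> j0 by (metis Least_le)
  have a0: "a ! 0 \<in> set (take i a)"
  proof -
    have l: "0 < length (take i a)" using il by simp
    have "take i a ! 0 \<in> set (take i a)" using nth_mem[OF l] .
    moreover have "take i a ! 0 = a ! 0" using il by simp
    ultimately show ?thesis by simp
  qed
  have a0s: "a ! 0 \<in> hspan K d (set (take i a))" using span_base[OF takeV(1) a0] .
  have "a ! 0 \<in> set a" using il by (intro nth_mem) linarith
  then have a0nz: "a ! 0 \<noteq> hzero K d" using Ia(1) indep_nonzero by blast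
  have j0pos: "j0 \<noteq> 0"
  proof
    assume "j0 = 0"
    then have "a ! 0 \<in> hspan K d {}" using Pj0 a0s unfolding P_def by auto
    then show False using span_empty a0nz by blast
  qed
  have b1: "Sb (b ! (j0 - 1)) \<le> s + e"
  proof (rule ccontr)
    assume c: "\<not> ?thesis"
    have "Gb \<subseteq> set (take (j0 - 1) b)"
    proof
      fix h assume "h \<in> Gb"
      then have h: "h \<in> set b" "Sb h \<le> s + e" by (auto simp: Gb_def)
      then obtain k where k: "k < length b" "h = b ! k" by (metis in_set_conv_nth)
      have "k < j0 - 1"
      proof (rule ccontr)
        assume "\<not> k < j0 - 1"
        then have "Sb (b ! (j0 - 1)) \<le> Sb (b ! k)" using sorted_nth_mono[OF sb', of "j0 - 1" k] k by simp
        then show False using c h k by simp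
      qed
      then have l: "k < length (take (j0 - 1) b)" using k by simp
      have "take (j0 - 1) b ! k \<in> set (take (j0 - 1) b)" using nth_mem[OF l] .
      moreover have "take (j0 - 1) b ! k = h" using k \<open>k < j0 - 1\<close> by simp
      ultimately show "h \<in> set (take (j0 - 1) b)" by simp
    qed
    then have "P (j0 - 1)" unfolding P_def using spanA span_mono by blast
    then have "j0 \<le> j0 - 1" using j0 by (metis Least_le)
    then show False using j0pos by simp
  qed
  define t where "t = Sb (b ! (j0 - 1))"
  define Ga where "Ga = {h\<in>set a. Sa h \<le> t + e}"
  have GaV: "Ga \<subseteq> homology K d" using aV by (auto simp: Ga_def)
  have step2: "y \<in> hspan K d Ga" if y: "y \<in> set (take j0 b)" for y
  proof -
    obtain k where k: "k < length (take j0 b)" "y = take j0 b ! k" using y by (metis in_set_conv_nth)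
    then have k2: "k < j0" "k < length b" "y = b ! k" by auto
    have "Sb y \<le> t" unfolding t_def
      using sorted_nth_mono[OF sb', of k "j0 - 1"] k2 j0le by simp
    moreover have yV: "y \<in> homology K d" "y \<noteq> hzero K d"
      using k2 bV Ib(1) indep_nonzero by auto
    ultimately have "Sa y \<le> t + e" using stab[OF yV] by (simp add: Sa_def Sb_def)
    moreover have "y \<in> hspan K d {h\<in>set a. Sa h \<le> Sa y}" using greedy[OF oa yV(1)] by (simp add: Sa_def)
    ultimately have yin: "y \<in> hspan K d {h\<in>set a. Sa h \<le> Sa y}" and sub: "{h\<in>set a. Sa h \<le> Sa y} \<subseteq> Ga"
      by (auto simp: Ga_def)
    show ?thesis using span_mono[OF sub] yin by blast
  qed
  have spanB: "hspan K d (set (take j0 b)) \<subseteq> hspan K d Ga"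
    using span_subset_span[OF _ GaV] step2 by blast
  have aiin: "ai \<in> set (take i a)"
  proof -
    have l: "i - 1 < length (take i a)" using il by simp
    have "take i a ! (i - 1) \<in> set (take i a)" using nth_mem[OF l] .
    moreover have "take i a ! (i - 1) = ai" using il by (simp add: ai_def)
    ultimately show ?thesis by simp
  qed
  have aiGa: "ai \<in> hspan K d Ga" using span_base[OF takeV(1) aiin] Pj0 spanB unfolding P_def by blast
  have b2: "s \<le> t + e"
  proof (rule ccontr)
    assume c: "\<not> ?thesis"
    have "Ga \<subseteq> set a - {ai}" using c by (auto simp: Ga_def s_def)
    then have "ai \<in> hspan K d (set a - {ai})" using aiGa span_mono by blast
    moreover have "ai \<in> set a" using il by (simp add: ai_def)
    ultimately show False using Ia(1) by (auto simp: isindep_def)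
  qed
  have "filt_size la K a i = s" by (simp add: filt_size_def s_def ai_def Sa_def)
  moreover have "filt_size lb K b (proj_idx K d a b i) = t"
    by (simp add: filt_size_def t_def Sb_def j0_def)
  ultimately show ?thesis using b1 b2 unfolding t_def by simp
qed

end

lemma Min_le_shift:
  fixes f g :: "'a \<Rightarrow> real"
  assumes "finite A" "A \<noteq> {}" "\<And>x. x \<in> A \<Longrightarrow> f x \<le> g x + e"
  shows "Min (f ` A) \<le> Min (g ` A) + e"
proof -
  have "Min (g ` A) \<in> g ` A" using assms(1,2) by (intro Min_in) auto
  then obtain x where x: "x \<in> A" "g x = Min (g ` A)" by (metis imageE)
  have "Min (f ` A) \<le> f x" using x assms by (intro Min_le) auto
  then show ?thesis using x assms(3)[of x] by simp
qed

lemma Max_le_shift: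
  fixes f g :: "'a \<Rightarrow> real"
  assumes "finite A" "A \<noteq> {}" "\<And>x. x \<in> A \<Longrightarrow> f x \<le> g x + e"
  shows "Max (f ` A) \<le> Max (g ` A) + e"
proof -
  have "Max (f ` A) \<in> f ` A" using assms(1,2) by (intro Max_in) auto
  then obtain x where x: "x \<in> A" "f x = Max (f ` A)" by (metis imageE)
  have "g x \<le> Max (g ` A)" using x assms by (intro Max_ge) auto
  then show ?thesis using x assms(3)[of x] by simp
qed

lemma radius_eq:
  assumes sc: "simplicial_complex K" and h: "h \<in> homology K d" "h \<noteq> hzero K d"
  shows "radius l K p h = Min ((\<lambda>z. Max (geod_simplex l K p ` z)) ` h)"
proof -
  have finK: "finite K" using sc by (simp add: simplicial_complex_def)
  obtain a where a: "a \<in> cycles K d" "h = hclass K d a" using h by (auto simp: homology_def)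
  have hne: "h \<noteq> {}" using hclass_self[OF finK a(1)] a by auto
  have hfin: "finite h" using class_finite[OF finK h(1)] .
  have zK: "z \<subseteq> K" "finite z" "z \<noteq> {}" if "z \<in> h" for z
  proof -
    have "z \<in> cycles K d" using that a by (auto simp: hclass_def)
    then have zs: "z \<subseteq> simplices K d" by (simp add: cycles_def)
    then show "z \<subseteq> K" using simplices_sub by blast
    show "finite z" using chain_finite[OF finK zs] .
    show "z \<noteq> {}" using class_nonzero_noempty[OF finK h] that by auto
  qed
  define m where "m = (\<lambda>z. Max (geod_simplex l K p ` z))"
  have char: "carries (ball l K p t) h \<longleftrightarrow> Min (m ` h) \<le> t" for t
  proof -
    have "z \<subseteq> ball l K p t \<longleftrightarrow> (\<forall>\<sigma>\<in>z. geod_simplex l K p \<sigma> \<le> t)" if "z \<in> h" for z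
      unfolding ball_def using zK(1)[OF that] by blast
    then have "carries (ball l K p t) h \<longleftrightarrow> (\<exists>z\<in>h. \<forall>\<sigma>\<in>z. geod_simplex l K p \<sigma> \<le> t)"
      unfolding carries_def by blast
    also have "\<dots> \<longleftrightarrow> (\<exists>z\<in>h. m z \<le> t)"
      unfolding m_def using zK by (simp add: Max_le_iff)
    also have "\<dots> \<longleftrightarrow> Min (m ` h) \<le> t"
      using hfin hne by (simp add: Min_le_iff)
    finally show ?thesis .
  qed
  have "radius l K p h = (LEAST t. Min (m ` h) \<le> t)" unfolding radius_def char ..
  also have "\<dots> = Min (m ` h)" by (rule Least_equality) auto
  finally show ?thesis by (simp add: m_def)
qed

lemma size_stable:
  assumes sc: "simplicial_complex K" and h: "h \<in> homology K d" "h \<noteq> hzero K d"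
    and vne: "vertices K \<noteq> {}"
    and eps: "\<And>p q. p \<in> vertices K \<Longrightarrow> q \<in> vertices K \<Longrightarrow> geod l1 K p q \<le> geod l2 K p q + e"
  shows "hsize l1 K h \<le> hsize l2 K h + e"
proof -
  have finK: "finite K" using sc by (simp add: simplicial_complex_def)
  have finV: "finite (vertices K)" using sc by (auto simp: simplicial_complex_def vertices_def)
  obtain a where a: "a \<in> cycles K d" "h = hclass K d a" using h by (auto simp: homology_def)
  have hne: "h \<noteq> {}" using hclass_self[OF finK a(1)] a by auto
  have hfin: "finite h" using class_finite[OF finK h(1)] .
  have zK: "z \<subseteq> K" "finite z" "z \<noteq> {}" if "z \<in> h" for z
  proof -
    have "z \<in> cycles K d" using that a by (auto simp: hclass_def)
    then have zs: "z \<subseteq> simplices K d" by (simp add: cycles_def)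
    then show "z \<subseteq> K" using simplices_sub by blast
    show "finite z" using chain_finite[OF finK zs] .
    show "z \<noteq> {}" using class_nonzero_noempty[OF finK h] that by auto
  qed
  have sig: "finite \<sigma>" "\<sigma> \<noteq> {}" "\<sigma> \<subseteq> vertices K" if "\<sigma> \<in> K" for \<sigma>
    using sc that by (auto simp: simplicial_complex_def vertices_def)
  have gs: "geod_simplex l1 K p \<sigma> \<le> geod_simplex l2 K p \<sigma> + e"
    if "p \<in> vertices K" "\<sigma> \<in> K" for p \<sigma>
    unfolding geod_simplex_def using sig[OF that(2)] eps[OF that(1)] by (intro Max_le_shift) auto
  have rad: "radius l1 K p h \<le> radius l2 K p h + e" if p: "p \<in> vertices K" for p
    unfolding radius_eq[OF sc h]
  proof (rule Min_le_shift[OF hfin hne])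
    fix z assume "z \<in> h"
    then show "Max (geod_simplex l1 K p ` z) \<le> Max (geod_simplex l2 K p ` z) + e"
      using zK[of z] gs[OF p] by (intro Max_le_shift) auto
  qed
  show ?thesis unfolding hsize_def using finV vne rad by (intro Min_le_shift) auto
qed

theorem theorem3p5:
  fixes K :: "'v set set" and l1 l2 :: "'v set \<Rightarrow> real" and d :: nat
    and hs1 hs2 :: "'v set set set list"
  assumes "simplicial_complex K"
    and "skel_connected K"
    and "edge_lengths K l1" and "edge_lengths K l2"
    and "optimal_basis l1 K d hs1" and "sorted (map (hsize l1 K) hs1)"
    and "optimal_basis l2 K d hs2" and "sorted (map (hsize l2 K) hs2)"
  shows "filt_dist l1 l2 K d hs1 hs2 \<le> geod_eps l1 l2 K"
proof -
  note sc = assms(1)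
  have finK: "finite K" using sc by (simp add: simplicial_complex_def)
  have finV: "finite (vertices K)" using sc by (auto simp: simplicial_complex_def vertices_def)
  have vne: "vertices K \<noteq> {}"
  proof -
    obtain \<sigma> where s: "\<sigma> \<in> K" using assms(2) by (auto simp: skel_connected_def)
    then have "\<sigma> \<noteq> {}" using sc by (simp add: simplicial_complex_def)
    then obtain v where "v \<in> \<sigma>" by blast
    then have "v \<in> vertices K" using s by (auto simp: vertices_def)
    then show ?thesis by blast
  qed
  define E where "E = {\<bar>geod l1 K p q - geod l2 K p q\<bar> | p q. p \<in> vertices K \<and> q \<in> vertices K}"
  have Efin: "finite E"
    unfolding E_def by (rule finite_image_set2) (use finV in simp_all)
  have Ege: "\<bar>geod l1 K p q - geod l2 K p q\<bar> \<le> geod_eps l1 l2 K"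
    if "p \<in> vertices K" "q \<in> vertices K" for p q
  proof -
    have "\<bar>geod l1 K p q - geod l2 K p q\<bar> \<in> E" using that unfolding E_def by blast
    then show ?thesis unfolding geod_eps_def E_def[symmetric] using Efin by (rule Max_ge[rotated])
  qed
  define e where "e = geod_eps l1 l2 K"
  obtain v where v: "v \<in> vertices K" using vne by blast
  have e0: "0 \<le> e" using Ege[OF v v] unfolding e_def by simp
  have st12: "hsize l1 K h \<le> hsize l2 K h + e" if "h \<in> homology K d" "h \<noteq> hzero K d" for h
  proof (rule size_stable[OF sc that vne])
    fix p q assume "p \<in> vertices K" "q \<in> vertices K"
    then have "\<bar>geod l1 K p q - geod l2 K p q\<bar> \<le> e" using Ege unfolding e_def by blast
    then show "geod l1 K p q \<le> geod l2 K p q + e" by linarith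
  qed
  have st21: "hsize l2 K h \<le> hsize l1 K h + e" if "h \<in> homology K d" "h \<noteq> hzero K d" for h
  proof (rule size_stable[OF sc that vne])
    fix p q assume "p \<in> vertices K" "q \<in> vertices K"
    then have "\<bar>geod l1 K p q - geod l2 K p q\<bar> \<le> e" using Ege unfolding e_def by blast
    then show "geod l2 K p q \<le> geod l1 K p q + e" by linarith
  qed
  have A: "\<bar>filt_size l1 K hs1 i - filt_size l2 K hs2 (proj_idx K d hs1 hs2 i)\<bar> \<le> e"
    if "i \<in> {1..length hs1}" for i
    using bound_one[OF finK assms(5,6,7,8) _ that] st12 st21 by blast
  have B: "\<bar>filt_size l2 K hs2 i - filt_size l1 K hs1 (proj_idx K d hs2 hs1 i)\<bar> \<le> e"
    if "i \<in> {1..length hs2}" for i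
    using bound_one[OF finK assms(7,8,5,6) _ that] st12 st21 by blast
  have fin: "finite ({0} \<union>
     {\<bar>filt_size l1 K hs1 i - filt_size l2 K hs2 (proj_idx K d hs1 hs2 i)\<bar> | i. i \<in> {1..length hs1}} \<union>
     {\<bar>filt_size l2 K hs2 i - filt_size l1 K hs1 (proj_idx K d hs2 hs1 i)\<bar> | i. i \<in> {1..length hs2}})"
    by simp
  show ?thesis unfolding filt_dist_def e_def[symmetric]
    using A B e0 by (subst Max_le_iff[OF fin]) blast+
qed

end
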